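(* Let $0\le z<x$ and define $h(y)=\operatorname{BP}(x,y)+\operatorname{BP}(y,z)$ for $y\in(z,x)$. Call a pair $(u,v)$ good if $v\ge cu$ and bad if $v<cu$. At every $y\in(z,x)$ with $y\ne cx$ and $z\ne cy$, $h$ is differentiable, and: (i) if $(x,y)$ and $(y,z)$ are both good, then $h'(y)>0$ when $y<\frac{x+z}{2}$ and $h'(y)<0$ when $y>\frac{x+z}2$; (ii) if $(x,y)$ is good and $(y,z)$ is bad, then $h'(y)>0$ when $y<\frac{x}{2-c}$ and $h'(y)<0$ when $y>\frac x{2-c}$; (iii) if $(x,y)$ is bad (whether $(y,z)$ is good or bad), then $h'(y)>0$.
   Context: Let $c=e^{2\pi}/1728$. For $x\ge y\ge0$ define (with the convention $0\log0=0$) \[f(x,y)=(x-y)\log(1728(1-c))+x\log x-y\log y-(x-y)\log(x-y),\qquad g(x,y)=x\log1728-2\pi y,\] and $\operatorname{BP}(x,y)=f(x,y)$ if $y\ge cx$, $\operatorname{BP}(x,y)=g(x,y)$ if $y<cx$. This is continuous on $\{(x,y):x\ge y\ge0\}$. *)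

theory Defs
  imports "HOL-Analysis.Analysis"
begin

definition bp_c :: real where
  "bp_c = exp (2 * pi) / 1728"

definition xlogx :: "real \<Rightarrow> real" where
  "xlogx t = (if t = 0 then 0 else t * ln t)"

definition bp_f :: "real \<Rightarrow> real \<Rightarrow> real" where
  "bp_f x y = (x - y) * ln (1728 * (1 - bp_c)) + xlogx x - xlogx y - xlogx (x - y)"

definition bp_g :: "real \<Rightarrow> real \<Rightarrow> real" where
  "bp_g x y = x * ln 1728 - 2 * pi * y"

definition BP :: "real \<Rightarrow> real \<Rightarrow> real" where
  "BP x y = (if y \<ge> bp_c * x then bp_f x y else bp_g x y)"

end

theory Submission
  imports Defs
begin

lemma exp2pi_bound: "exp (2 * pi) < 864"
proof -
  have p: "2 * pi \<le> 6 + 3/10" using pi_approx by simp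
  have e1: "exp (2*pi) \<le> exp (6 + 3/10)" using p by simp
  have e2: "exp (6 + 3/10) = exp 6 * exp (3/10::real)" by (rule exp_add)
  have e3: "exp (6::real) = exp 1 ^ 6" using exp_of_nat_mult[of 6 "1::real"] by simp
  have a: "1 + (-3/10::real) \<le> exp (-3/10)" by (rule exp_ge_add_one_self)
  have pr: "exp (3/10::real) * exp (-3/10) = 1" by (simp flip: exp_add)
  have "exp (3/10::real) * (7/10) \<le> exp (3/10) * exp (-3/10)"
    by (rule mult_left_mono) (use a in auto)
  hence e4: "exp (3/10::real) \<le> 10/7" using pr by linarith
  have e5: "exp 1 ^ 6 \<le> (272/100::real) ^ 6"
    using e_less_272 by (intro power_mono) auto
  have "exp 1 ^ 6 * exp (3/10) \<le> (272/100::real) ^ 6 * (10/7)"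
    using e4 e5 by (intro mult_mono) auto
  moreover have "(272/100::real) ^ 6 * (10/7) < 864" by (simp add: eval_nat_numeral)
  moreover have "exp (2*pi) \<le> exp 1 ^ 6 * exp (3/10)" using e1 unfolding e2 e3 .
  ultimately show ?thesis by linarith
qed

lemma c_pos: "bp_c > 0" unfolding bp_c_def by simp
lemma c_small: "bp_c < 1/2" unfolding bp_c_def using exp2pi_bound by simp
lemma L_big: "ln (1728 * (1 - bp_c)) > 2 * pi"
proof -
  have a: "1728 * (1 - bp_c) = 1728 - exp (2*pi)" unfolding bp_c_def by simp
  have b: "exp (2*pi) < 1728 * (1 - bp_c)" unfolding a using exp2pi_bound by linarith
  have "ln (exp (2*pi)) < ln (1728 * (1 - bp_c))"
    using b by (subst ln_less_cancel_iff) (use c_small in auto)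
  thus ?thesis by simp
qed

lemma ln1728_big: "ln 1728 > 2 * pi"
proof -
  have b: "exp (2*pi) < 1728" using exp2pi_bound by linarith
  have "ln (exp (2*pi)) < ln 1728"
    using b by (subst ln_less_cancel_iff) auto
  thus ?thesis by simp
qed

lemma derA:
  assumes "0 < y" "y < x" "y \<noteq> bp_c * x"
  shows "((\<lambda>t. BP x t) has_real_derivative
     (if y > bp_c * x then ln (x - y) - ln y - ln (1728 * (1 - bp_c)) else - 2 * pi)) (at y)"
proof (cases "y > bp_c * x")
  case True
  define L where "L = ln (1728 * (1 - bp_c))"
  have x0: "x > 0" using assms by simp
  have d: "((\<lambda>t. (x - t) * L + xlogx x - t * ln t - (x - t) * ln (x - t)) has_real_derivative
      (ln (x - y) - ln y - L)) (at y)"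
    using assms by (auto intro!: derivative_eq_intros)
  have e: "BP x t = (x - t) * L + xlogx x - t * ln t - (x - t) * ln (x - t)"
    if "t \<in> {bp_c * x <..< x}" for t
  proof -
    have "bp_c * x > 0" using c_pos x0 by simp
    hence "t > 0" using that by simp
    thus ?thesis using that unfolding BP_def bp_f_def xlogx_def L_def by auto
  qed
  from e have "((\<lambda>t. BP x t) has_real_derivative (ln (x - y) - ln y - L)) (at y)"
    by (intro has_field_derivative_transform_within_open[OF d, where S="{bp_c * x <..< x}"])
       (use e True assms in auto)
  thus ?thesis using True L_def by simp
next
  case False
  hence F: "y < bp_c * x" using assms by simp
  have d: "((\<lambda>t. x * ln 1728 - 2 * pi * t) has_real_derivative (- 2 * pi)) (at y)"
    by (auto intro!: derivative_eq_intros)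
  have e: "BP x t = x * ln 1728 - 2 * pi * t" if "t \<in> {..< bp_c * x}" for t
    using that unfolding BP_def bp_g_def by auto
  from e have "((\<lambda>t. BP x t) has_real_derivative (- 2 * pi)) (at y)"
    by (intro has_field_derivative_transform_within_open[OF d, where S="{..< bp_c * x}"])
       (use e F in auto)
  thus ?thesis using False by simp
qed

lemma derB:
  assumes "0 \<le> z" "z < y" "z \<noteq> bp_c * y"
  shows "((\<lambda>t. BP t z) has_real_derivative
     (if z > bp_c * y then ln (1728 * (1 - bp_c)) + ln y - ln (y - z) else ln 1728)) (at y)"
proof (cases "z > bp_c * y")
  case True
  define L where "L = ln (1728 * (1 - bp_c))"
  have d: "((\<lambda>t. (t - z) * L + t * ln t - xlogx z - (t - z) * ln (t - z)) has_real_derivative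
      (L + ln y - ln (y - z))) (at y)"
    using assms by (auto intro!: derivative_eq_intros)
  have e: "BP t z = (t - z) * L + t * ln t - xlogx z - (t - z) * ln (t - z)"
    if "t \<in> {z <..< z / bp_c}" for t
  proof -
    have "t > 0" "bp_c * t < z" using that c_pos assms by (auto simp: field_simps)
    thus ?thesis using that unfolding BP_def bp_f_def xlogx_def L_def by auto
  qed
  from e have "((\<lambda>t. BP t z) has_real_derivative (L + ln y - ln (y - z))) (at y)"
    by (intro has_field_derivative_transform_within_open[OF d, where S="{z <..< z / bp_c}"])
       (use e True assms c_pos in \<open>auto simp: field_simps\<close>)
  thus ?thesis using True L_def by simp
next
  case False
  hence F: "z < bp_c * y" using assms by simp
  have d: "((\<lambda>t. t * ln 1728 - 2 * pi * z) has_real_derivative (ln 1728)) (at y)"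
    by (auto intro!: derivative_eq_intros)
  have e: "BP t z = t * ln 1728 - 2 * pi * z" if "t \<in> {z / bp_c <..}" for t
    using that c_pos unfolding BP_def bp_g_def by (auto simp: field_simps)
  from e have "((\<lambda>t. BP t z) has_real_derivative (ln 1728)) (at y)"
    by (intro has_field_derivative_transform_within_open[OF d, where S="{z / bp_c <..}"])
       (use e F c_pos in \<open>auto simp: field_simps\<close>)
  thus ?thesis using False by simp
qed


theorem mainTheorem14:
  fixes x y z :: real
  assumes "0 \<le> z" "z < x" "z < y" "y < x"
    and "y \<noteq> bp_c * x" "z \<noteq> bp_c * y"
  shows "(\<lambda>t. BP x t + BP t z) differentiable (at y)
    \<and> ((y \<ge> bp_c * x \<and> z \<ge> bp_c * y) \<longrightarrow>
         (y < (x + z) / 2 \<longrightarrow> deriv (\<lambda>t. BP x t + BP t z) y > 0) \<and>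
         (y > (x + z) / 2 \<longrightarrow> deriv (\<lambda>t. BP x t + BP t z) y < 0))
    \<and> ((y \<ge> bp_c * x \<and> z < bp_c * y) \<longrightarrow>
         (y < x / (2 - bp_c) \<longrightarrow> deriv (\<lambda>t. BP x t + BP t z) y > 0) \<and>
         (y > x / (2 - bp_c) \<longrightarrow> deriv (\<lambda>t. BP x t + BP t z) y < 0))
    \<and> (y < bp_c * x \<longrightarrow> deriv (\<lambda>t. BP x t + BP t z) y > 0)"
proof -
  define L where "L = ln (1728 * (1 - bp_c))"
  define D1 where "D1 = (if y > bp_c * x then ln (x - y) - ln y - L else - 2 * pi)"
  define D2 where "D2 = (if z > bp_c * y then L + ln y - ln (y - z) else ln 1728)"
  have y0: "y > 0" using assms by simp
  have d: "((\<lambda>t. BP x t + BP t z) has_real_derivative (D1 + D2)) (at y)"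
    using DERIV_add[OF derA[OF y0 assms(4,5)] derB[OF assms(1,3,6)]]
    unfolding D1_def D2_def L_def by simp
  hence diff: "(\<lambda>t. BP x t + BP t z) differentiable (at y)"
    using real_differentiable_def by blast
  have dv: "deriv (\<lambda>t. BP x t + BP t z) y = D1 + D2" using d by (rule DERIV_imp_deriv)
  have c0: "0 < bp_c" "bp_c < 1/2" using c_pos c_small by auto
  have Lsplit: "L = ln 1728 + ln (1 - bp_c)" unfolding L_def using c0 ln_mult[of 1728 "1 - bp_c"] by simp
  have p1: "(bp_c * x \<le> y \<and> bp_c * y \<le> z) \<longrightarrow>
         (y < (x + z) / 2 \<longrightarrow> D1 + D2 > 0) \<and> (y > (x + z) / 2 \<longrightarrow> D1 + D2 < 0)"
  proof (intro impI conjI)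
    assume a: "bp_c * x \<le> y \<and> bp_c * y \<le> z"
    hence D: "D1 + D2 = ln (x - y) - ln (y - z)" using assms unfolding D1_def D2_def by auto
    { assume "y < (x + z) / 2"
      thus "D1 + D2 > 0" unfolding D using assms by simp }
    { assume "y > (x + z) / 2"
      thus "D1 + D2 < 0" unfolding D using assms by simp }
  qed
  have p2: "(bp_c * x \<le> y \<and> z < bp_c * y) \<longrightarrow>
         (y < x / (2 - bp_c) \<longrightarrow> D1 + D2 > 0) \<and> (y > x / (2 - bp_c) \<longrightarrow> D1 + D2 < 0)"
  proof (intro impI conjI)
    assume a: "bp_c * x \<le> y \<and> z < bp_c * y"
    hence "D1 + D2 = ln (x - y) - ln y - ln (1 - bp_c)" using assms Lsplit unfolding D1_def D2_def by auto
    also have "\<dots> = ln (x - y) - ln (y * (1 - bp_c))" using c0 y0 by (simp add: ln_mult)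
    finally have D: "D1 + D2 = ln (x - y) - ln (y * (1 - bp_c))" .
    have pos: "y * (1 - bp_c) > 0" "x - y > 0" using c0 y0 assms by auto
    { assume "y < x / (2 - bp_c)"
      hence "y * (2 - bp_c) < x" using c0 by (simp add: field_simps)
      hence "y * (1 - bp_c) < x - y" by (simp add: algebra_simps)
      thus "D1 + D2 > 0" unfolding D using pos by simp }
    { assume "y > x / (2 - bp_c)"
      hence "y * (2 - bp_c) > x" using c0 by (simp add: field_simps)
      hence "y * (1 - bp_c) > x - y" by (simp add: algebra_simps)
      thus "D1 + D2 < 0" unfolding D using pos by simp }
  qed
  have p3: "y < bp_c * x \<longrightarrow> D1 + D2 > 0"
  proof
    assume "y < bp_c * x"
    hence D1: "D1 = - 2 * pi" unfolding D1_def by simp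
    have "ln (y - z) \<le> ln y" using assms by simp
    hence "D2 > 2 * pi" unfolding D2_def using L_big ln1728_big L_def by auto
    thus "D1 + D2 > 0" using D1 by simp
  qed
  show ?thesis using diff dv p1 p2 p3 by simp
qed

end
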